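(* Let $0<\alpha<1$, $m>1$, and let $a=\alpha/m$, $b=B=\alpha$, $A=1-\frac{m-1}{m}\alpha$, $F(z,s)=(m+1)\big(B(1-s)+(A+B)(z-s)\big)$ and $$K(z,u)=\frac{1}{\Gamma(1-\alpha)}\int_{\left(\frac{1-z}{1-u}\right)^{1/b}}^{1} F\big(z,\,1-s^{b}(1-u)\big)\,(1-s)^{-\alpha}\,s^{a+b}\,ds,\qquad 0\le u\le z<1 .$$ Then for every $X\in(0,1)$ there exist constants $0<K_-\le K_+$ (depending on $\alpha,m,X$) such that $$K_-\,(z-u)^{1-\alpha}\le K(z,u)\le K_+\,(z-u)^{1-\alpha}\qquad\text{for all } 0\le u\le z\le X .$$
   Context: This is the kernel of the Volterra equation $y(z)^{m+1}=\int_0^z K(z,u)y(u)\,du$ to which self-similar solutions $u(x,t)=t^{a}U(xt^{-b})$ of $\partial_t^\alpha u=(u^mu_x)_x$ with the Robin condition $u^mu_x(0,t)=-u(0,t)$ reduce. *)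

theory Defs
  imports "HOL-Analysis.Analysis"
begin

definition par_a :: "real \<Rightarrow> real \<Rightarrow> real" where
  "par_a \<alpha> m = \<alpha> / m"

definition par_b :: "real \<Rightarrow> real \<Rightarrow> real" where
  "par_b \<alpha> m = \<alpha>"

definition par_A :: "real \<Rightarrow> real \<Rightarrow> real" where
  "par_A \<alpha> m = 1 - (m - 1) / m * \<alpha>"

definition par_B :: "real \<Rightarrow> real \<Rightarrow> real" where
  "par_B \<alpha> m = \<alpha>"

definition kerF :: "real \<Rightarrow> real \<Rightarrow> real \<Rightarrow> real \<Rightarrow> real" where
  "kerF \<alpha> m z s = (m + 1) * (par_B \<alpha> m * (1 - s) + (par_A \<alpha> m + par_B \<alpha> m) * (z - s))"

text \<open>The Volterra kernel K(z,u), for 0 <= u <= z < 1. The integral is the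
  (Henstock-Kurzweil) integral over the interval from ((1-z)/(1-u))^(1/b) to 1;
  the integrand is absolutely integrable there.\<close>

definition kernelK :: "real \<Rightarrow> real \<Rightarrow> real \<Rightarrow> real \<Rightarrow> real" where
  "kernelK \<alpha> m z u =
     (1 / Gamma (1 - \<alpha>)) *
     integral {((1 - z) / (1 - u)) powr (1 / par_b \<alpha> m) .. 1}
       (\<lambda>s. kerF \<alpha> m z (1 - s powr (par_b \<alpha> m) * (1 - u)) * (1 - s) powr (- \<alpha>)
             * s powr (par_a \<alpha> m + par_b \<alpha> m))"

end

theory Submission imports Defs begin
lemma gmeas: "(\<lambda>s. kerF \<alpha> m z (1 - s powr (par_b \<alpha> m) * (1 - u)) * (1 - s) powr (- \<alpha>)
             * s powr (par_a \<alpha> m + par_b \<alpha> m)) \<in> borel_measurable (lebesgue_on {x..y::real})"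
proof -
  have "(\<lambda>s. kerF \<alpha> m z (1 - s powr (par_b \<alpha> m) * (1 - u)) * (1 - s) powr (- \<alpha>)
             * s powr (par_a \<alpha> m + par_b \<alpha> m)) \<in> borel_measurable borel"
    unfolding kerF_def by measurable
  from measurable_compose[OF id_borel_measurable_lebesgue_on this] show ?thesis by simp
qed
lemma kint: assumes "0 < \<alpha>" "\<alpha> < 1" "c \<le> 1"
  shows "((\<lambda>s. (1 - s) powr (- \<alpha>)) has_integral (1 - c) powr (1 - \<alpha>) / (1 - \<alpha>)) {c..(1::real)}"
proof -
  define G where "G = (\<lambda>s::real. - ((1 - s) powr (1 - \<alpha>)) / (1 - \<alpha>))"
  have "((\<lambda>s. (1 - s) powr (- \<alpha>)) has_integral (G 1 - G c)) {c..1}"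
  proof (rule fundamental_theorem_of_calculus_interior)
    show "continuous_on {c..1} G"
      using assms unfolding G_def by (intro continuous_intros continuous_on_powr') auto
    fix x assume x: "x \<in> {c<..<1}"
    show "(G has_vector_derivative (1 - x) powr (- \<alpha>)) (at x)"
    proof -
      have "(G has_real_derivative
          (- ((1 - \<alpha>) * (1 - x) powr (1 - \<alpha> - 1) * (-1)) / (1 - \<alpha>))) (at x)"
        using x assms unfolding G_def by (intro derivative_eq_intros) auto
      moreover have "(- ((1 - \<alpha>) * (1 - x) powr (1 - \<alpha> - 1) * (-1)) / (1 - \<alpha>)) = (1 - x) powr (- \<alpha>)"
        using assms by simp
      ultimately have "(G has_real_derivative (1 - x) powr (- \<alpha>)) (at x)"
        by simp
      then show "(G has_vector_derivative (1 - x) powr (- \<alpha>)) (at x)"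
        by (simp add: has_real_derivative_iff_has_vector_derivative)
    qed
  qed (use assms in auto)
  then show ?thesis using assms by (simp add: G_def)
qed
lemma s0_bounds:
  fixes \<alpha> X u z :: real
  assumes a: "0 < \<alpha>" "\<alpha> < 1" and X: "X < 1" and uz: "0 \<le> u" "u \<le> z" "z \<le> X"
  defines "s0 \<equiv> ((1 - z) / (1 - u)) powr (1 / \<alpha>)"
  shows "z - u \<le> 1 - s0" "1 - s0 \<le> (1 / \<alpha>) / (1 - X) * (z - u)"
    "(1 - X) powr (1 / \<alpha>) \<le> s0" "s0 \<le> 1" "s0 powr \<alpha> = (1 - z) / (1 - u)"
proof -
  define y where "y = (1 - z) / (1 - u)"
  have "X * u \<le> 1 * u" using uz X by (intro mult_right_mono) auto
  then have y0: "1 - X \<le> y" using uz X unfolding y_def by (simp add: field_simps)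
  have y1: "y \<le> 1" using uz X unfolding y_def by (simp add: field_simps)
  have ypos: "0 < y" using y0 X by linarith
  have p1: "1 \<le> 1 / \<alpha>" using a by simp
  have "s0 \<le> y" unfolding s0_def y_def[symmetric] using powr_le_one_le[OF ypos y1 p1] .
  moreover have "1 - y = (z - u) / (1 - u)" using uz X unfolding y_def by (simp add: field_simps)
  moreover have "z - u \<le> (z - u) / (1 - u)" using uz X
    by (simp add: le_divide_eq mult_left_le)
  ultimately show "z - u \<le> 1 - s0" by linarith
  have "s0 = exp ((1/\<alpha>) * ln y)" unfolding s0_def y_def[symmetric] using ypos by (simp add: powr_def)
  then have e1: "1 + (1/\<alpha>) * ln y \<le> s0" using exp_ge_add_one_self by metis
  have "ln (1 / y) \<le> 1 / y - 1" using ypos ln_le_minus_one by simp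
  then have "- ln y \<le> 1 / y - 1" using ypos by (simp add: ln_div)
  moreover have "1 / y - 1 = (z - u) / (1 - z)" using uz X unfolding y_def by (simp add: field_simps)
  ultimately have "- ln y \<le> (z - u) / (1 - z)" by simp
  moreover have "(z - u) / (1 - z) \<le> (z - u) / (1 - X)"
    using uz X by (intro divide_left_mono) auto
  ultimately have "- ln y \<le> (z - u) / (1 - X)" by linarith
  then have "(1/\<alpha>) * (- ln y) \<le> (1/\<alpha>) * ((z - u) / (1 - X))"
    using a by (intro mult_left_mono) auto
  with e1 show "1 - s0 \<le> (1 / \<alpha>) / (1 - X) * (z - u)" by simp
  show "(1 - X) powr (1 / \<alpha>) \<le> s0" unfolding s0_def y_def[symmetric]
    using y0 X a by (intro powr_mono2) auto
  show "s0 \<le> 1" unfolding s0_def y_def[symmetric] using y1 ypos a by (intro powr_le1) auto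
  show "s0 powr \<alpha> = (1 - z) / (1 - u)" unfolding s0_def y_def[symmetric] using a ypos
    by (simp add: powr_powr)
qed
lemma parA_pos: assumes "0 < \<alpha>" "\<alpha> < 1" "1 < m" shows "0 < par_A \<alpha> m"
proof -
  have "(m - 1) / m < 1" using assms by simp
  then have "(m - 1) / m * \<alpha> < 1 * 1" using assms
    by (intro mult_strict_mono) auto
  then show ?thesis unfolding par_A_def by simp
qed

lemma pointwise:
  fixes \<alpha> m X u z s :: real
  assumes a: "0 < \<alpha>" "\<alpha> < 1" and m: "1 < m" and X: "X < 1" and uz: "0 \<le> u" "u \<le> z" "z \<le> X"
    and s: "((1 - z) / (1 - u)) powr (1 / \<alpha>) \<le> s" "s \<le> 1"
  shows "0 \<le> kerF \<alpha> m z (1 - s powr (par_b \<alpha> m) * (1 - u)) * s powr (par_a \<alpha> m + par_b \<alpha> m)"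
    "(m+1)*\<alpha>*(1-X)*((1-X) powr (1/\<alpha>)) powr (par_a \<alpha> m + par_b \<alpha> m)
       \<le> kerF \<alpha> m z (1 - s powr (par_b \<alpha> m) * (1 - u)) * s powr (par_a \<alpha> m + par_b \<alpha> m)"
    "kerF \<alpha> m z (1 - s powr (par_b \<alpha> m) * (1 - u)) * s powr (par_a \<alpha> m + par_b \<alpha> m)
       \<le> (m+1)*(2*\<alpha> + par_A \<alpha> m)"
proof -
  note sb = s0_bounds[OF a X uz]
  define c where "c = par_a \<alpha> m + par_b \<alpha> m"
  have cpos: "0 < c" unfolding c_def par_a_def par_b_def using a m by (simp add: add_pos_pos)
  have L: "(1 - X) powr (1 / \<alpha>) \<le> s" using sb(3) s by linarith
  have Lpos: "0 < (1 - X) powr (1 / \<alpha>)" using X by simp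
  have spos: "0 < s" using L Lpos by linarith
  have "(((1 - z) / (1 - u)) powr (1 / \<alpha>)) powr \<alpha> \<le> s powr \<alpha>"
    using s(1) a uz X by (intro powr_mono2) auto
  then have sa: "(1 - z) / (1 - u) \<le> s powr \<alpha>" using sb(5) by simp
  define w where "w = s powr \<alpha> * (1 - u)"
  have w1: "1 - z \<le> w" unfolding w_def using sa uz X by (simp add: divide_le_eq)
  have "s powr \<alpha> \<le> 1" using s spos a by (intro powr_le1) auto
  then have w2: "w \<le> 1" unfolding w_def using uz X spos
    by (intro mult_le_one) auto
  have Apos: "0 < par_A \<alpha> m" using parA_pos a m .
  have kF: "kerF \<alpha> m z (1 - s powr (par_b \<alpha> m) * (1 - u)) = (m+1) * (\<alpha> * w + (par_A \<alpha> m + \<alpha>) * (z - 1 + w))"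
    unfolding kerF_def par_B_def par_b_def w_def by simp
  have t2: "0 \<le> (par_A \<alpha> m + \<alpha>) * (z - 1 + w)" using Apos a w1 by simp
  have Flow: "(m+1)*\<alpha>*(1-X) \<le> kerF \<alpha> m z (1 - s powr (par_b \<alpha> m) * (1 - u))"
  proof -
    have "\<alpha> * (1 - X) \<le> \<alpha> * w" using w1 uz a by (intro mult_left_mono) auto
    then have "\<alpha> * (1 - X) \<le> \<alpha> * w + (par_A \<alpha> m + \<alpha>) * (z - 1 + w)" using t2 by linarith
    then have "(m+1) * (\<alpha> * (1 - X)) \<le> (m+1) * (\<alpha> * w + (par_A \<alpha> m + \<alpha>) * (z - 1 + w))"
      using m by (intro mult_left_mono) auto
    then show ?thesis using kF by (simp add: mult.assoc)
  qed
  have Fup: "kerF \<alpha> m z (1 - s powr (par_b \<alpha> m) * (1 - u)) \<le> (m+1)*(2*\<alpha> + par_A \<alpha> m)"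
  proof -
    have "\<alpha> * w \<le> \<alpha> * 1" using w2 a by (intro mult_left_mono) auto
    moreover have "(par_A \<alpha> m + \<alpha>) * (z - 1 + w) \<le> (par_A \<alpha> m + \<alpha>) * 1"
      using w2 uz X Apos a by (intro mult_left_mono) auto
    ultimately have "\<alpha> * w + (par_A \<alpha> m + \<alpha>) * (z - 1 + w) \<le> 2*\<alpha> + par_A \<alpha> m"
      by (simp only: mult_1_right)
    then show ?thesis using kF m by (simp add: mult_left_mono)
  qed
  have Fpos: "0 \<le> (m+1)*\<alpha>*(1-X)" using m a X by simp
  have sc1: "((1-X) powr (1/\<alpha>)) powr c \<le> s powr c" using L Lpos cpos by (intro powr_mono2) auto
  have sc2: "s powr c \<le> 1" using spos s cpos by (intro powr_le1) auto
  show "0 \<le> kerF \<alpha> m z (1 - s powr (par_b \<alpha> m) * (1 - u)) * s powr (par_a \<alpha> m + par_b \<alpha> m)"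
    using Fpos Flow by simp
  show "(m+1)*\<alpha>*(1-X)*((1-X) powr (1/\<alpha>)) powr (par_a \<alpha> m + par_b \<alpha> m)
       \<le> kerF \<alpha> m z (1 - s powr (par_b \<alpha> m) * (1 - u)) * s powr (par_a \<alpha> m + par_b \<alpha> m)"
    unfolding c_def[symmetric] using Flow sc1 Fpos by (intro mult_mono) auto
  show "kerF \<alpha> m z (1 - s powr (par_b \<alpha> m) * (1 - u)) * s powr (par_a \<alpha> m + par_b \<alpha> m)
       \<le> (m+1)*(2*\<alpha> + par_A \<alpha> m)"
  proof -
    have "kerF \<alpha> m z (1 - s powr (par_b \<alpha> m) * (1 - u)) * s powr c \<le> kerF \<alpha> m z (1 - s powr (par_b \<alpha> m) * (1 - u))"
      using Flow Fpos sc2 by (intro mult_right_le_one_le) auto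
    then show ?thesis using Fup unfolding c_def by linarith
  qed
qed
theorem mainTheorem2:
  fixes \<alpha> m :: real
  assumes "0 < \<alpha>" "\<alpha> < 1" "m > 1"
  shows "\<forall>X. 0 < X \<and> X < 1 \<longrightarrow>
           (\<exists>Km Kp. 0 < Km \<and> Km \<le> Kp \<and>
              (\<forall>u z. 0 \<le> u \<and> u \<le> z \<and> z \<le> X \<longrightarrow>
                 Km * (z - u) powr (1 - \<alpha>) \<le> kernelK \<alpha> m z u \<and>
                 kernelK \<alpha> m z u \<le> Kp * (z - u) powr (1 - \<alpha>)))"
proof (intro allI impI)
  fix X :: real assume X: "0 < X \<and> X < 1"
  have a: "0 < \<alpha>" "\<alpha> < 1" and m: "1 < m" using assms by auto
  define c where "c = par_a \<alpha> m + par_b \<alpha> m"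
  define c1 where "c1 = (m+1)*\<alpha>*(1-X)*((1-X) powr (1/\<alpha>)) powr c"
  define c2 where "c2 = (m+1)*(2*\<alpha> + par_A \<alpha> m)"
  define G where "G = Gamma (1 - \<alpha>)"
  define Q where "Q = ((1/\<alpha>)/(1-X)) powr (1 - \<alpha>)"
  define Km where "Km = c1 / ((1 - \<alpha>) * G)"
  define Kp where "Kp = max Km (c2 / ((1 - \<alpha>) * G) * Q)"
  have Gpos: "0 < G" unfolding G_def using a by simp
  have c1pos: "0 < c1" unfolding c1_def using a m X by simp
  have Kmpos: "0 < Km" unfolding Km_def using c1pos Gpos a by simp
  have Qpos: "0 \<le> Q" unfolding Q_def by simp
  have c1c2: "c1 \<le> c2"
  proof -
    have "(m+1)*\<alpha>*(1-X)*((1-X) powr (1/\<alpha>)) powr c \<le> (m+1)*(2*\<alpha> + par_A \<alpha> m)"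
      using pointwise(2,3)[OF a m _ order.refl order.refl, of X 1] X a
      by (simp add: c_def)
    then show ?thesis by (simp add: c1_def c2_def)
  qed
  show "\<exists>Km Kp. 0 < Km \<and> Km \<le> Kp \<and>
              (\<forall>u z. 0 \<le> u \<and> u \<le> z \<and> z \<le> X \<longrightarrow>
                 Km * (z - u) powr (1 - \<alpha>) \<le> kernelK \<alpha> m z u \<and>
                 kernelK \<alpha> m z u \<le> Kp * (z - u) powr (1 - \<alpha>))"
  proof (intro exI conjI allI impI)
    show "0 < Km" by (rule Kmpos)
    show "Km \<le> Kp" unfolding Kp_def by simp
    fix u z :: real assume uz: "0 \<le> u \<and> u \<le> z \<and> z \<le> X"
    then have uz': "0 \<le> u" "u \<le> z" "z \<le> X" by auto
    have X1: "X < 1" using X by simp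
    define s0 where "s0 = ((1 - z) / (1 - u)) powr (1 / par_b \<alpha> m)"
    have s0_eq: "s0 = ((1 - z) / (1 - u)) powr (1 / \<alpha>)" unfolding s0_def par_b_def by simp
    note sb = s0_bounds[OF a X1 uz', folded s0_eq]
    define k where "k = (\<lambda>s::real. (1 - s) powr (- \<alpha>))"
    define g where "g = (\<lambda>s. kerF \<alpha> m z (1 - s powr (par_b \<alpha> m) * (1 - u)) * (1 - s) powr (- \<alpha>)
             * s powr (par_a \<alpha> m + par_b \<alpha> m))"
    define A where "A = (1 - s0) powr (1 - \<alpha>) / (1 - \<alpha>)"
    have hk: "(k has_integral A) {s0..1}" unfolding k_def A_def using kint[OF a sb(4)] .
    have pw: "c1 * k s \<le> g s \<and> g s \<le> c2 * k s" if s: "s \<in> {s0..1}" for s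
    proof -
      have s': "((1 - z) / (1 - u)) powr (1 / \<alpha>) \<le> s" "s \<le> 1" using s s0_eq by auto
      note P = pointwise[OF a m X1 uz' s']
      have k0: "0 \<le> k s" unfolding k_def by simp
      have ge: "g s = (kerF \<alpha> m z (1 - s powr (par_b \<alpha> m) * (1 - u)) * s powr (par_a \<alpha> m + par_b \<alpha> m)) * k s"
        unfolding g_def k_def by (simp add: algebra_simps)
      show ?thesis unfolding ge using P(2,3) k0
        by (auto simp: c1_def c2_def c_def intro: mult_right_mono)
    qed
    have gm: "g \<in> borel_measurable (lebesgue_on {s0..1})" unfolding g_def by (rule gmeas)
    have hk2: "((\<lambda>s. c2 * k s) has_integral c2 * A) {s0..1}" using hk by (rule has_integral_mult_right)
    have hk1: "((\<lambda>s. c1 * k s) has_integral c1 * A) {s0..1}" using hk by (rule has_integral_mult_right)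
    have gint: "g integrable_on {s0..1}"
    proof (rule measurable_bounded_by_integrable_imp_integrable[OF gm])
      show "(\<lambda>s. c2 * k s) integrable_on {s0..1}" using hk2 by blast
      fix s assume s: "s \<in> {s0..1}"
      have "0 \<le> c1 * k s" using c1pos unfolding k_def by simp
      then show "norm (g s) \<le> c2 * k s" using pw[OF s] by simp
    qed simp
    define I where "I = integral {s0..1} g"
    have I1: "c1 * A \<le> I"
    proof -
      have "integral {s0..1} (\<lambda>s. c1 * k s) \<le> integral {s0..1} g"
        using hk1 gint pw by (intro integral_le) auto
      then show ?thesis unfolding I_def using integral_unique[OF hk1] by linarith
    qed
    have I2: "I \<le> c2 * A"
    proof -
      have "integral {s0..1} g \<le> integral {s0..1} (\<lambda>s. c2 * k s)"
        using hk2 gint pw by (intro integral_le) auto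
      then show ?thesis unfolding I_def using integral_unique[OF hk2] by linarith
    qed
    have KK: "kernelK \<alpha> m z u = I / G"
      unfolding kernelK_def I_def G_def g_def s0_def by simp
    define D where "D = z - u"
    have D0: "0 \<le> D" unfolding D_def using uz by simp
    have e0: "0 \<le> 1 - \<alpha>" using a by simp
    have low: "D powr (1 - \<alpha>) \<le> (1 - s0) powr (1 - \<alpha>)"
      using sb(1) D0 e0 unfolding D_def by (intro powr_mono2) auto
    have "(1 - s0) powr (1 - \<alpha>) \<le> ((1 / \<alpha>) / (1 - X) * D) powr (1 - \<alpha>)"
      using sb(2) sb(4) e0 unfolding D_def by (intro powr_mono2) auto
    also have "\<dots> = Q * D powr (1 - \<alpha>)" unfolding Q_def
      using a X D0 powr_mult[of "(1 / \<alpha>) / (1 - X)" D "1 - \<alpha>"] by simp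
    finally have up: "(1 - s0) powr (1 - \<alpha>) \<le> Q * D powr (1 - \<alpha>)" .
    have dpos: "0 < (1 - \<alpha>) * G" using a Gpos by simp
    show "Km * (z - u) powr (1 - \<alpha>) \<le> kernelK \<alpha> m z u"
    proof -
      have "Km * D powr (1 - \<alpha>) \<le> Km * (1 - s0) powr (1 - \<alpha>)"
        using low Kmpos by (intro mult_left_mono) auto
      also have "\<dots> = (c1 * A) / G" unfolding Km_def A_def by (simp add: field_simps)
      also have "\<dots> \<le> I / G" using I1 Gpos by (intro divide_right_mono) auto
      finally show ?thesis unfolding KK D_def .
    qed
    show "kernelK \<alpha> m z u \<le> Kp * (z - u) powr (1 - \<alpha>)"
    proof -
      have "I / G \<le> (c2 * A) / G" using I2 Gpos by (intro divide_right_mono) auto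
      also have "\<dots> = c2 / ((1 - \<alpha>) * G) * (1 - s0) powr (1 - \<alpha>)"
        unfolding A_def by (simp add: field_simps)
      also have "\<dots> \<le> c2 / ((1 - \<alpha>) * G) * (Q * D powr (1 - \<alpha>))"
        using up c1pos c1c2 dpos by (intro mult_left_mono) auto
      also have "\<dots> = (c2 / ((1 - \<alpha>) * G) * Q) * D powr (1 - \<alpha>)" by simp
      also have "\<dots> \<le> Kp * D powr (1 - \<alpha>)" unfolding Kp_def
        by (intro mult_right_mono) auto
      finally show ?thesis unfolding KK D_def .
    qed
  qed
qed
end
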